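(* Let $\rho_A,\rho_B,\rho_O,\rho_T>0$, $\boldsymbol\alpha\in\mathbb R^c$, $\boldsymbol v_1\in\mathbb R^d$. Let $\mathcal Z=\{\boldsymbol z_x\}_{x\in[c]}\in(\mathbb R^d)^c$ and define $\mathcal Z'=\{\boldsymbol z'_x\}_{x\in[c]}$ by $$\boldsymbol z'_x=\rho_A\boldsymbol z_x+\frac{\rho_B}{d_x}\sum_{y\in[c]}w_{x,y}\boldsymbol z_y+\rho_O\sum_{y\in[c]}\alpha_y\boldsymbol z_y+\rho_T\boldsymbol v_1.$$ Let $\boldsymbol Z\in\mathbb R^{d\times c}$ and $\boldsymbol Z'\in\mathbb R^{d\times c}$ be the matrices with columns $\boldsymbol z_x$ and $\boldsymbol z'_x$. Let $\boldsymbol M=\rho_A\boldsymbol I+\rho_B\boldsymbol D^{-1/2}\boldsymbol W\boldsymbol D^{-1/2}$ with eigenvalues $\lambda_1,\dots,\lambda_c$ arranged in non-increasing order of absolute value, and eigen-decomposition $$\boldsymbol M=\begin{bmatrix}\boldsymbol f&\boldsymbol X&\boldsymbol Y\end{bmatrix}\begin{bmatrix}\lambda_1&&\\&\boldsymbol\Lambda&\\&&\boldsymbol\Lambda'\end{bmatrix}\begin{bmatrix}\boldsymbol f^\top\\\boldsymbol X^\top\\\boldsymbol Y^\top\end{bmatrix},$$ with orthonormal eigenvectors, $\boldsymbol\Lambda=\mathrm{diag}(\lambda_2,\dots,\lambda_q)$, $\boldsymbol\Lambda'=\mathrm{diag}(\lambda_{q+1},\dots,\lambda_c)$ for some $2\le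 q<c$. Let $\delta_{\boldsymbol M}=|\lambda_q/\lambda_{q+1}|$. Then, provided $\lambda_{q+1}\neq0$, $\|\boldsymbol Z\boldsymbol D^{1/2}\boldsymbol X\|\neq0$ and $\|\boldsymbol Z\boldsymbol D^{1/2}\boldsymbol Y\|\ne0$, $$\frac{\|\boldsymbol Z'\boldsymbol D^{1/2}\boldsymbol X\|}{\|\boldsymbol Z\boldsymbol D^{1/2}\boldsymbol X\|}\ge\delta_{\boldsymbol M}\frac{\|\boldsymbol Z'\boldsymbol D^{1/2}\boldsymbol Y\|}{\|\boldsymbol Z\boldsymbol D^{1/2}\boldsymbol Y\|}.$$
   Context: $\mathcal G$ is a connected undirected graph on $[c]$ with (0/1) adjacency matrix $\widetilde{\boldsymbol W}$ and stationary distribution $\boldsymbol\pi$ of its random walk (all $\pi_x>0$). $\boldsymbol W=\{w_{x,y}\}$ with $w_{x,y}=\widetilde w_{x,y}\pi_x\pi_y$ is the reweighted adjacency matrix, $d_x=\sum_y w_{x,y}$, $\boldsymbol D=\mathrm{diag}(d_1,\dots,d_c)$. $\|\cdot\|$ denotes the Frobenius norm. *)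

theory Defs
  imports "HOL-Analysis.Analysis"
begin

text \<open>Vertices of the graph are the elements of a finite type 'c (so c = CARD('c));
  the embedding dimension is a finite type 'd.  Matrices are HOL-Analysis matrices:
  real^'n^'m is an m x n matrix.\<close>

definition adjacency_matrix :: "real^'c^'c \<Rightarrow> bool" where
  "adjacency_matrix Wt \<longleftrightarrow> (\<forall>x y. Wt$x$y \<in> {0,1}) \<and> (\<forall>x y. Wt$x$y = Wt$y$x)"

definition graph_connected :: "real^'c^'c \<Rightarrow> bool" where
  "graph_connected Wt \<longleftrightarrow> (\<forall>x y. (x, y) \<in> {(a, b). Wt$a$b = 1}\<^sup>*)"

definition gdeg :: "real^'c^'c \<Rightarrow> 'c \<Rightarrow> real" where
  "gdeg Wt x = (\<Sum>y\<in>UNIV. Wt$x$y)"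

definition walk_matrix :: "real^'c^'c \<Rightarrow> real^'c^'c" where
  "walk_matrix Wt = (\<chi> x y. Wt$x$y / gdeg Wt x)"

definition stationary_distribution :: "real^'c^'c \<Rightarrow> real^'c \<Rightarrow> bool" where
  "stationary_distribution Wt p \<longleftrightarrow>
     (\<forall>x. p$x \<ge> 0) \<and> (\<Sum>x\<in>UNIV. p$x) = 1 \<and>
     (\<forall>y. (\<Sum>x\<in>UNIV. p$x * walk_matrix Wt $x$y) = p$y)"

definition reweighted :: "real^'c^'c \<Rightarrow> real^'c \<Rightarrow> real^'c^'c" where
  "reweighted Wt p = (\<chi> x y. Wt$x$y * p$x * p$y)"

definition wdeg :: "real^'c^'c \<Rightarrow> 'c \<Rightarrow> real" where
  "wdeg W x = (\<Sum>y\<in>UNIV. W$x$y)"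

definition diag_mat :: "('c \<Rightarrow> real) \<Rightarrow> real^'c^'c" where
  "diag_mat f = (\<chi> x y. if x = y then f x else 0)"

definition Mmat :: "real \<Rightarrow> real \<Rightarrow> real^'c^'c \<Rightarrow> real^'c^'c" where
  "Mmat rA rB W = rA *\<^sub>R mat 1 +
     rB *\<^sub>R (diag_mat (\<lambda>x. 1 / sqrt (wdeg W x)) ** W ** diag_mat (\<lambda>x. 1 / sqrt (wdeg W x)))"

definition col_matrix :: "('c \<Rightarrow> real^'d) \<Rightarrow> real^'c^'d" where
  "col_matrix z = (\<chi> i x. z x $ i)"

definition update :: "real \<Rightarrow> real \<Rightarrow> real \<Rightarrow> real \<Rightarrow> real^'c \<Rightarrow> real^'d \<Rightarrow> real^'c^'c
     \<Rightarrow> ('c \<Rightarrow> real^'d) \<Rightarrow> ('c \<Rightarrow> real^'d)" where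
  "update rA rB rO rT alpha v1 W z = (\<lambda>x.
      rA *\<^sub>R z x + (rB / wdeg W x) *\<^sub>R (\<Sum>y\<in>UNIV. W$x$y *\<^sub>R z y)
      + rO *\<^sub>R (\<Sum>y\<in>UNIV. alpha$y *\<^sub>R z y) + rT *\<^sub>R v1)"

definition outer :: "real^'c \<Rightarrow> real^'c \<Rightarrow> real^'c^'c" where
  "outer a b = (\<chi> i j. a$i * b$j)"

text \<open>Frobenius norm of the matrix A [u_k]_{k in K}, i.e. of the product of A with the matrix
  whose columns are the vectors u_k (k in K, in increasing order):
  the squared Frobenius norm is the sum of squared Euclidean norms of the columns A u_k.\<close>
definition frob_cols :: "real^'c^'d \<Rightarrow> (nat \<Rightarrow> real^'c) \<Rightarrow> nat set \<Rightarrow> real" where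
  "frob_cols A u K = sqrt (\<Sum>k\<in>K. (norm (A *v u k))\<^sup>2)"

end

theory Submission
  imports Defs
begin


lemma exmax: "\<exists>x0. \<forall>y. (f::'c::finite \<Rightarrow> real) y \<le> f x0"
proof -
  have "Max (range f) \<in> range f" by (rule Max_in) auto
  then obtain x0 where "f x0 = Max (range f)" by (metis imageE)
  moreover have "f y \<le> Max (range f)" for y by (rule Max_ge) auto
  ultimately show ?thesis by metis
qed

lemma top_eig:
  fixes W :: "real^'c::finite^'c" and g :: "real^'c" and rA rB mu :: real
  assumes nn: "\<forall>x y. W$x$y \<ge> 0" and dpos: "\<forall>x. wdeg W x > 0"
    and conn: "\<forall>x y. (x,y) \<in> {(a,b). W$a$b > 0}\<^sup>*"
    and rA: "rA > 0" and rB: "rB > 0" and g0: "g \<noteq> 0"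
    and eq: "\<forall>x. rA * g$x + rB * (\<Sum>y\<in>UNIV. W$x$y * g$y / sqrt (wdeg W y)) / sqrt (wdeg W x) = mu * g$x"
    and mu: "\<bar>mu\<bar> \<ge> rA + rB"
  shows "\<exists>c. \<forall>x. g$x = c * sqrt (wdeg W x)"
proof -
  define s where "s x = sqrt (wdeg W x)" for x
  define h where "h x = g$x / s x" for x
  have spos: "s x > 0" for x using dpos by (simp add: s_def)
  have ss: "s x * s x = wdeg W x" for x using dpos by (simp add: s_def less_imp_le)
  have gh: "g$x = s x * h x" for x using spos[of x] by (simp add: h_def)
  have eq2: "rB * (\<Sum>y\<in>UNIV. W$x$y * h y) = (mu - rA) * wdeg W x * h x" for x
  proof -
    have "rA * g$x + rB * (\<Sum>y\<in>UNIV. W$x$y * h y) / s x = mu * g$x"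
      using eq[rule_format, of x] by (simp add: h_def s_def)
    hence "rA * (s x * s x) * h x + rB * (\<Sum>y\<in>UNIV. W$x$y * h y) = mu * (s x * s x) * h x"
      using spos[of x] by (simp add: gh field_simps)
    thus ?thesis by (simp add: ss algebra_simps)
  qed
  obtain x0 where x0: "\<forall>y. \<bar>h y\<bar> \<le> \<bar>h x0\<bar>"
    using exmax[of "\<lambda>y. \<bar>h y\<bar>"] by blast
  have hx0: "h x0 \<noteq> 0"
  proof
    assume "h x0 = 0"
    hence "\<forall>y. h y = 0" using x0 by (metis abs_le_zero_iff abs_zero)
    hence "g = 0" by (simp add: vec_eq_iff gh)
    with g0 show False by simp
  qed
  have "\<bar>mu - rA\<bar> * wdeg W x0 * \<bar>h x0\<bar> = rB * \<bar>\<Sum>y\<in>UNIV. W$x0$y * h y\<bar>"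
    using arg_cong[OF eq2[of x0], of abs] rB dpos[rule_format, of x0] by (simp add: abs_mult)
  also have "\<dots> \<le> rB * (\<Sum>y\<in>UNIV. W$x0$y * \<bar>h x0\<bar>)"
  proof -
    have "\<bar>\<Sum>y\<in>UNIV. W$x0$y * h y\<bar> \<le> (\<Sum>y\<in>UNIV. \<bar>W$x0$y * h y\<bar>)" by (rule sum_abs)
    also have "\<dots> \<le> (\<Sum>y\<in>UNIV. W$x0$y * \<bar>h x0\<bar>)"
      apply (rule sum_mono) using nn x0 by (simp add: abs_mult mult_left_mono)
    finally show ?thesis using rB by simp
  qed
  also have "\<dots> = rB * wdeg W x0 * \<bar>h x0\<bar>" by (simp add: wdeg_def sum_distrib_right)
  finally have "\<bar>mu - rA\<bar> \<le> rB" using dpos hx0 by simp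
  hence mueq: "mu = rA + rB" using mu rA rB by linarith
  have eq3: "(\<Sum>y\<in>UNIV. W$x$y * (h x - h y)) = 0" for x
  proof -
    have "rB * (\<Sum>y\<in>UNIV. W$x$y * h y) = rB * ((\<Sum>y\<in>UNIV. W$x$y) * h x)"
      using eq2[of x] mueq by (simp add: wdeg_def)
    hence "(\<Sum>y\<in>UNIV. W$x$y * h y) = (\<Sum>y\<in>UNIV. W$x$y) * h x" using rB by simp
    moreover have "(\<Sum>y\<in>UNIV. W$x$y * (h x - h y)) = (\<Sum>y\<in>UNIV. W$x$y) * h x - (\<Sum>y\<in>UNIV. W$x$y * h y)"
      by (simp add: right_diff_distrib sum_subtractf sum_distrib_right)
    ultimately show ?thesis by simp
  qed
  obtain x1 where x1: "\<forall>y. h y \<le> h x1"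
    using exmax[of h] by blast
  have hstep: "h b = h x1" if "h a = h x1" "W$a$b > 0" for a b
  proof -
    have "\<forall>y\<in>UNIV. W$a$y * (h a - h y) = 0"
      apply (rule sum_nonneg_eq_0_iff[THEN iffD1, OF _ _ eq3[of a]])
      using nn x1 that(1) by simp_all
    hence "W$a$b * (h a - h b) = 0" by simp
    with that show ?thesis by simp
  qed
  have all: "h y = h x1" for y
  proof -
    have "(x1, y) \<in> {(a,b). W$a$b > 0}\<^sup>*" using conn by simp
    thus ?thesis
    proof (induction rule: rtrancl_induct)
      case base thus ?case by simp
    next
      case (step b c) thus ?case using hstep[of b c] by simp
    qed
  qed
  show ?thesis
    apply (rule exI[of _ "h x1"]) using gh all by (simp add: s_def mult.commute)
qed



lemma ifm1: "(if P then a else 0) * (b::real) = (if P then a*b else 0)" by simp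
lemma ifm2: "(b::real) * (if P then a else 0) = (if P then b*a else 0)" by simp

lemma Mentry:
  fixes W :: "real^'c::finite^'c"
  shows "Mmat rA rB W $ i $ j = rA * (if i = j then 1 else 0) + rB * (W$i$j / (sqrt (wdeg W i) * sqrt (wdeg W j)))"
  unfolding Mmat_def diag_mat_def
  by (simp add: matrix_matrix_mult_def mat_def ifm1 ifm2 sum.delta cong: if_cong)

lemma Mv:
  fixes W :: "real^'c::finite^'c"
  shows "(Mmat rA rB W *v v) $ x = rA * v$x + rB * (\<Sum>y\<in>UNIV. W$x$y * v$y / sqrt (wdeg W y)) / sqrt (wdeg W x)"
proof -
  have "(Mmat rA rB W *v v) $ x = (\<Sum>y\<in>UNIV. (rA * (if x = y then 1 else 0)) * v$y) + (\<Sum>y\<in>UNIV. rB * (W$x$y / (sqrt (wdeg W x) * sqrt (wdeg W y))) * v$y)"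
    by (simp add: matrix_vector_mult_def Mentry distrib_right sum.distrib)
  also have "\<dots> = rA * v$x + rB * (\<Sum>y\<in>UNIV. W$x$y * v$y / sqrt (wdeg W y)) / sqrt (wdeg W x)"
    by (simp add: ifm1 ifm2 sum.delta sum_distrib_left sum_divide_distrib mult.commute mult.left_commute cong: if_cong)
  finally show ?thesis .
qed

lemma outer_sum_entry:
  "(\<Sum>k\<in>K. lam k *\<^sub>R outer (u k) (u k)) $ i $ j = (\<Sum>k\<in>K. lam k * (u k $ i * u k $ j))"
  by (simp add: sum_component outer_def)

lemma colmat_entry:
  "(col_matrix z ** diag_mat s) $ i $ x = z x $ i * s x"
  unfolding col_matrix_def diag_mat_def matrix_matrix_mult_def
  by (simp add: ifm1 ifm2 sum.delta cong: if_cong)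

lemma colmat_mv:
  "((col_matrix z ** diag_mat s) *v v) $ i = (\<Sum>x\<in>UNIV. z x $ i * s x * v $ x)"
  by (simp add: matrix_vector_mult_def colmat_entry)



theorem corollary3:
  fixes Wt :: "real^'c::finite^'c" and p :: "real^'c"
    and rA rB rO rT :: real and alpha :: "real^'c" and v1 :: "real^'d::finite"
    and z :: "'c \<Rightarrow> real^'d"
    and lam :: "nat \<Rightarrow> real" and u :: "nat \<Rightarrow> real^'c" and q :: nat
  assumes adj: "adjacency_matrix Wt"
    and conn: "graph_connected Wt"
    and stat: "stationary_distribution Wt p"
    and ppos: "\<forall>x. p$x > 0"
    and rho: "rA > 0" "rB > 0" "rO > 0" "rT > 0"
    and orth: "\<forall>i\<in>{1..CARD('c)}. \<forall>j\<in>{1..CARD('c)}. u i \<bullet> u j = (if i = j then 1 else 0)"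
    and decomp: "Mmat rA rB (reweighted Wt p) = (\<Sum>k\<in>{1..CARD('c)}. lam k *\<^sub>R outer (u k) (u k))"
    and order: "\<forall>i j. 1 \<le> i \<and> i \<le> j \<and> j \<le> CARD('c) \<longrightarrow> \<bar>lam j\<bar> \<le> \<bar>lam i\<bar>"
    and q: "2 \<le> q" "q < CARD('c)"
    and lamq: "lam (q + 1) \<noteq> 0"
    and nzX: "frob_cols (col_matrix z ** diag_mat (\<lambda>x. sqrt (wdeg (reweighted Wt p) x))) u {2..q} \<noteq> 0"
    and nzY: "frob_cols (col_matrix z ** diag_mat (\<lambda>x. sqrt (wdeg (reweighted Wt p) x))) u {q+1..CARD('c)} \<noteq> 0"
  shows
    "frob_cols (col_matrix (update rA rB rO rT alpha v1 (reweighted Wt p) z)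
          ** diag_mat (\<lambda>x. sqrt (wdeg (reweighted Wt p) x))) u {2..q}
       / frob_cols (col_matrix z ** diag_mat (\<lambda>x. sqrt (wdeg (reweighted Wt p) x))) u {2..q}
     \<ge> \<bar>lam q / lam (q + 1)\<bar> *
       (frob_cols (col_matrix (update rA rB rO rT alpha v1 (reweighted Wt p) z)
          ** diag_mat (\<lambda>x. sqrt (wdeg (reweighted Wt p) x))) u {q+1..CARD('c)}
       / frob_cols (col_matrix z ** diag_mat (\<lambda>x. sqrt (wdeg (reweighted Wt p) x))) u {q+1..CARD('c)})"
proof -
  define W where "W = reweighted Wt p"
  define s where "s = (\<lambda>x. sqrt (wdeg W x))"
  define n where "n = CARD('c)"
  define A where "A = col_matrix z ** diag_mat s"
  define A' where "A' = col_matrix (update rA rB rO rT alpha v1 W z) ** diag_mat s"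
  have Wt01: "Wt$x$y = 0 \<or> Wt$x$y = 1" for x y using adj by (auto simp: adjacency_matrix_def)
  have Wnn: "\<forall>x y. W$x$y \<ge> 0"
  proof (intro allI)
    fix x y show "W$x$y \<ge> 0" using Wt01[of x y] ppos by (auto simp: W_def reweighted_def less_imp_le)
  qed
  have Wsym: "W$x$y = W$y$x" for x y
    using adj by (simp add: W_def reweighted_def adjacency_matrix_def mult.commute mult.left_commute)
  have Wedge: "W$a$b > 0" if "Wt$a$b = 1" for a b
    using that ppos by (simp add: W_def reweighted_def)
  have conn': "\<forall>x y. (x,y) \<in> {(a,b). W$a$b > 0}\<^sup>*"
  proof (intro allI)
    fix x y
    have "(x,y) \<in> {(a, b). Wt$a$b = 1}\<^sup>*" using conn by (simp add: graph_connected_def)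
    moreover have "{(a, b). Wt$a$b = 1} \<subseteq> {(a,b). W$a$b > 0}" using Wedge by auto
    ultimately show "(x,y) \<in> {(a,b). W$a$b > 0}\<^sup>*" using rtrancl_mono by blast
  qed
  have dpos: "\<forall>x. wdeg W x > 0"
  proof
    fix x
    have "\<exists>y::'c. y \<noteq> x"
    proof (rule ccontr)
      assume "\<not> (\<exists>y::'c. y \<noteq> x)"
      hence "(UNIV::'c set) = {x}" by auto
      hence "CARD('c) = card {x}" by (metis)
      hence "CARD('c) = 1" by simp
      with q show False by simp
    qed
    then obtain y :: 'c where yx: "y \<noteq> x" by blast
    have "(x,y) \<in> {(a,b). W$a$b > 0}\<^sup>*" using conn' by simp
    hence "x = y \<or> (\<exists>a. W$x$a > 0)"
      by (cases rule: converse_rtranclE) auto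
    with yx obtain a where "W$x$a > 0" by blast
    moreover have "W$x$a \<le> wdeg W x" unfolding wdeg_def
      by (rule member_le_sum) (use Wnn in auto)
    ultimately show "wdeg W x > 0" by simp
  qed
  have spos: "s x > 0" for x using dpos by (simp add: s_def)
  have ss: "s x * s x = wdeg W x" for x using dpos by (simp add: s_def less_imp_le)
  have eig: "\<forall>x. rA * u k$x + rB * (\<Sum>y\<in>UNIV. W$x$y * u k$y / sqrt (wdeg W y)) / sqrt (wdeg W x) = lam k * u k$x"
    if k: "k \<in> {1..n}" for k
  proof
    fix x
    have "(Mmat rA rB W *v u k) $ x = (\<Sum>j\<in>UNIV. (\<Sum>m\<in>{1..n}. lam m * (u m $ x * u m $ j)) * u k $ j)"
      using decomp by (simp add: W_def n_def matrix_vector_mult_def outer_def)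
    also have "\<dots> = (\<Sum>m\<in>{1..n}. lam m * u m $ x * (\<Sum>j\<in>UNIV. u m $ j * u k $ j))"
      apply (simp add: sum_distrib_left sum_distrib_right)
      apply (subst sum.swap)
      apply (simp add: mult.assoc)
      done
    also have "\<dots> = (\<Sum>m\<in>{1..n}. lam m * u m $ x * (if m = k then 1 else 0))"
    proof (rule sum.cong[OF refl])
      fix m assume m: "m \<in> {1..n}"
      have "u m \<bullet> u k = (if m = k then 1 else 0)" using orth m k by (simp add: n_def)
      thus "lam m * u m $ x * (\<Sum>j\<in>UNIV. u m $ j * u k $ j) = lam m * u m $ x * (if m = k then 1 else 0)"
        by (simp add: inner_vec_def)
    qed
    also have "\<dots> = lam k * u k $ x" using k by (simp add: ifm2 cong: if_cong)
    finally show "rA * u k$x + rB * (\<Sum>y\<in>UNIV. W$x$y * u k$y / sqrt (wdeg W y)) / sqrt (wdeg W x) = lam k * u k$x"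
      by (simp add: Mv)
  qed
  have fu0: "(\<Sum>x\<in>UNIV. s x * u k$x) = 0" if k: "k \<in> {2..n}" for k
  proof (rule ccontr)
    define fu where "fu = (\<Sum>x\<in>UNIV. s x * u k$x)"
    assume "(\<Sum>x\<in>UNIV. s x * u k$x) \<noteq> 0"
    hence fu: "fu \<noteq> 0" by (simp add: fu_def)
    have k1: "k \<in> {1..n}" using k by simp
    have e: "rA * u k$x + rB * (\<Sum>y\<in>UNIV. W$x$y * u k$y / s y) / s x = lam k * u k$x" for x
      using eig[OF k1] by (simp add: s_def)
    have "lam k * fu = (\<Sum>x\<in>UNIV. s x * (lam k * u k$x))"
      by (simp add: fu_def sum_distrib_left mult.left_commute)
    also have "\<dots> = (\<Sum>x\<in>UNIV. rA * (s x * u k$x) + rB * (\<Sum>y\<in>UNIV. W$x$y * u k$y / s y))"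
    proof (rule sum.cong[OF refl])
      fix x
      show "s x * (lam k * u k$x) = rA * (s x * u k$x) + rB * (\<Sum>y\<in>UNIV. W$x$y * u k$y / s y)"
        unfolding e[of x, symmetric] using spos[of x] by (simp add: field_simps)
    qed
    also have "\<dots> = rA * fu + rB * (\<Sum>x\<in>UNIV. \<Sum>y\<in>UNIV. W$x$y * u k$y / s y)"
      by (simp add: fu_def sum.distrib sum_distrib_left)
    also have "(\<Sum>x\<in>UNIV. \<Sum>y\<in>UNIV. W$x$y * u k$y / s y) = (\<Sum>y\<in>UNIV. \<Sum>x\<in>UNIV. W$y$x * u k$y / s y)"
      by (subst sum.swap) (simp add: Wsym)
    also have "\<dots> = (\<Sum>y\<in>UNIV. wdeg W y * u k$y / s y)"
      by (simp add: wdeg_def sum_distrib_right sum_divide_distrib)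
    also have "\<dots> = fu"
      unfolding fu_def
    proof (rule sum.cong[OF refl])
      fix y show "wdeg W y * u k$y / s y = s y * u k$y"
        unfolding ss[of y, symmetric] using spos[of y] by simp
    qed
    finally have "lam k * fu = (rA + rB) * fu" by (simp add: algebra_simps)
    hence lk: "lam k = rA + rB" using fu by simp
    have "\<bar>lam k\<bar> \<le> \<bar>lam 1\<bar>" using order k by (simp add: n_def)
    hence mu: "\<bar>lam 1\<bar> \<ge> rA + rB" using lk rho by simp
    have one: "1 \<in> {1..n}" using k by simp
    have u11: "u 1 \<bullet> u 1 = 1" using orth one by (simp add: n_def)
    hence u1: "u 1 \<noteq> 0" by auto
    obtain c where c: "\<forall>x. u 1 $ x = c * sqrt (wdeg W x)"
      using top_eig[OF Wnn dpos conn' rho(1) rho(2) u1 eig[OF one] mu] by blast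
    have "u 1 \<bullet> u k = 0" using orth one k1 k by (simp add: n_def)
    moreover have "u 1 \<bullet> u k = c * fu"
    proof -
      have "u 1 \<bullet> u k = (\<Sum>x\<in>UNIV. u 1 $ x * u k $ x)" by (simp add: inner_vec_def)
      also have "\<dots> = (\<Sum>x\<in>UNIV. c * (s x * u k $ x))"
        by (rule sum.cong[OF refl]) (simp only: c s_def mult.assoc)
      finally show ?thesis by (simp add: fu_def sum_distrib_left)
    qed
    ultimately have "c = 0" using fu by simp
    hence "u 1 = 0" using c by (simp add: vec_eq_iff)
    with u1 show False by simp
  qed
  have A'u: "A' *v u k = lam k *\<^sub>R (A *v u k)" if k: "k \<in> {2..n}" for k
  proof (subst vec_eq_iff, intro allI)
    fix i
    define B where "B = rO * (\<Sum>y\<in>UNIV. alpha$y * z y$i) + rT * v1$i"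
    define v where "v = u k"
    have k1: "k \<in> {1..n}" using k by simp
    have e: "rB * (\<Sum>y\<in>UNIV. W$x$y * v$y / s y) = s x * (lam k - rA) * v$x" for x
    proof -
      have "rA * v$x + rB * (\<Sum>y\<in>UNIV. W$x$y * v$y / s y) / s x = lam k * v$x"
        using eig[OF k1] by (simp add: s_def v_def)
      thus ?thesis using spos[of x] by (simp add: field_simps)
    qed
    have f0: "(\<Sum>x\<in>UNIV. s x * v$x) = 0" using fu0[OF k] by (simp add: v_def)
    have upd: "update rA rB rO rT alpha v1 W z x $ i = rA * z x$i + rB / wdeg W x * (\<Sum>y\<in>UNIV. W$x$y * z y$i) + B" for x
      by (simp add: update_def B_def)
    have "(A' *v v) $ i = (\<Sum>x\<in>UNIV. (rA * z x$i + rB / wdeg W x * (\<Sum>y\<in>UNIV. W$x$y * z y$i) + B) * s x * v$x)"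
      by (simp add: A'_def colmat_mv upd)
    also have "\<dots> = (\<Sum>x\<in>UNIV. rA * (z x$i * s x * v$x) + rB * (\<Sum>y\<in>UNIV. W$x$y * z y$i * v$x / s x) + B * (s x * v$x))"
    proof (rule sum.cong[OF refl])
      fix x
      have "rB / wdeg W x * (\<Sum>y\<in>UNIV. W$x$y * z y$i) * s x * v$x = rB * ((\<Sum>y\<in>UNIV. W$x$y * z y$i) * v$x / s x)"
        unfolding ss[of x, symmetric] using spos[of x] by (simp add: field_simps)
      also have "\<dots> = rB * (\<Sum>y\<in>UNIV. W$x$y * z y$i * v$x / s x)"
        by (simp add: sum_distrib_right sum_divide_distrib)
      finally show "(rA * z x$i + rB / wdeg W x * (\<Sum>y\<in>UNIV. W$x$y * z y$i) + B) * s x * v$x = rA * (z x$i * s x * v$x) + rB * (\<Sum>y\<in>UNIV. W$x$y * z y$i * v$x / s x) + B * (s x * v$x)"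
        by (simp add: algebra_simps)
    qed
    also have "\<dots> = rA * (\<Sum>x\<in>UNIV. z x$i * s x * v$x) + rB * (\<Sum>x\<in>UNIV. \<Sum>y\<in>UNIV. W$x$y * z y$i * v$x / s x) + B * (\<Sum>x\<in>UNIV. s x * v$x)"
      by (simp add: sum.distrib sum_distrib_left)
    also have "(\<Sum>x\<in>UNIV. \<Sum>y\<in>UNIV. W$x$y * z y$i * v$x / s x) = (\<Sum>y\<in>UNIV. z y$i * (\<Sum>x\<in>UNIV. W$y$x * v$x / s x))"
      by (subst sum.swap) (simp add: Wsym sum_distrib_left mult_ac)
    also have "rB * \<dots> = (\<Sum>y\<in>UNIV. z y$i * (rB * (\<Sum>x\<in>UNIV. W$y$x * v$x / s x)))"
      by (simp add: sum_distrib_left mult_ac)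
    also have "\<dots> = (\<Sum>y\<in>UNIV. (lam k - rA) * (z y$i * s y * v$y))"
      by (rule sum.cong[OF refl], subst e, simp add: mult_ac)
    also have "\<dots> = (lam k - rA) * (\<Sum>x\<in>UNIV. z x$i * s x * v$x)"
      by (simp only: sum_distrib_left)
    finally have "(A' *v v) $ i = rA * (\<Sum>x\<in>UNIV. z x$i * s x * v$x) + (lam k - rA) * (\<Sum>x\<in>UNIV. z x$i * s x * v$x) + B * 0"
      by (simp only: f0)
    hence "(A' *v v) $ i = lam k * (\<Sum>x\<in>UNIV. z x$i * s x * v$x)"
      by (simp add: algebra_simps)
    thus "(A' *v u k) $ i = (lam k *\<^sub>R (A *v u k)) $ i"
      by (simp add: A_def colmat_mv v_def)
  qed
  define a where "a k = (norm (A *v u k))\<^sup>2" for k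
  have fA: "frob_cols A u K = sqrt (\<Sum>k\<in>K. a k)" for K by (simp add: frob_cols_def a_def)
  have fA': "frob_cols A' u K = sqrt (\<Sum>k\<in>K. (lam k)\<^sup>2 * a k)" if "K \<subseteq> {2..n}" for K
  proof -
    have "(\<Sum>k\<in>K. (norm (A' *v u k))\<^sup>2) = (\<Sum>k\<in>K. (lam k)\<^sup>2 * a k)"
      by (rule sum.cong[OF refl]) (use that A'u in \<open>auto simp: a_def power_mult_distrib\<close>)
    thus ?thesis by (simp add: frob_cols_def)
  qed
  have ann: "a k \<ge> 0" for k by (simp add: a_def)
  have SXpos: "(\<Sum>k\<in>{2..q}. a k) > 0"
  proof -
    have "(\<Sum>k\<in>{2..q}. a k) \<noteq> 0" using nzX fA unfolding A_def s_def W_def by auto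
    moreover have "(\<Sum>k\<in>{2..q}. a k) \<ge> 0" by (rule sum_nonneg) (simp add: ann)
    ultimately show ?thesis by simp
  qed
  have SYpos: "(\<Sum>k\<in>{q+1..n}. a k) > 0"
  proof -
    have "(\<Sum>k\<in>{q+1..n}. a k) \<noteq> 0" using nzY fA unfolding A_def s_def W_def n_def by auto
    moreover have "(\<Sum>k\<in>{q+1..n}. a k) \<ge> 0" by (rule sum_nonneg) (simp add: ann)
    ultimately show ?thesis by simp
  qed
  have SX': "(\<Sum>k\<in>{2..q}. (lam k)\<^sup>2 * a k) \<ge> (lam q)\<^sup>2 * (\<Sum>k\<in>{2..q}. a k)"
  proof -
    have "(lam q)\<^sup>2 * a k \<le> (lam k)\<^sup>2 * a k" if "k \<in> {2..q}" for k
    proof -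
      have "\<bar>lam q\<bar> \<le> \<bar>lam k\<bar>" using order that q by (simp add: n_def)
      hence "(lam q)\<^sup>2 \<le> (lam k)\<^sup>2" by (simp add: abs_le_square_iff)
      thus ?thesis using ann[of k] by (simp add: mult_right_mono)
    qed
    hence "(\<Sum>k\<in>{2..q}. (lam q)\<^sup>2 * a k) \<le> (\<Sum>k\<in>{2..q}. (lam k)\<^sup>2 * a k)" by (rule sum_mono)
    thus ?thesis by (simp add: sum_distrib_left)
  qed
  have SY': "(\<Sum>k\<in>{q+1..n}. (lam k)\<^sup>2 * a k) \<le> (lam (q+1))\<^sup>2 * (\<Sum>k\<in>{q+1..n}. a k)"
  proof -
    have "(lam k)\<^sup>2 * a k \<le> (lam (q+1))\<^sup>2 * a k" if "k \<in> {q+1..n}" for k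
    proof -
      have "\<bar>lam k\<bar> \<le> \<bar>lam (q+1)\<bar>" using order that q by (simp add: n_def)
      hence "(lam k)\<^sup>2 \<le> (lam (q+1))\<^sup>2" by (simp add: abs_le_square_iff)
      thus ?thesis using ann[of k] by (simp add: mult_right_mono)
    qed
    hence "(\<Sum>k\<in>{q+1..n}. (lam k)\<^sup>2 * a k) \<le> (\<Sum>k\<in>{q+1..n}. (lam (q+1))\<^sup>2 * a k)" by (rule sum_mono)
    thus ?thesis by (simp add: sum_distrib_left)
  qed
  define SX where "SX = (\<Sum>k\<in>{2..q}. a k)"
  define SY where "SY = (\<Sum>k\<in>{q+1..n}. a k)"
  define SX2 where "SX2 = (\<Sum>k\<in>{2..q}. (lam k)\<^sup>2 * a k)"
  define SY2 where "SY2 = (\<Sum>k\<in>{q+1..n}. (lam k)\<^sup>2 * a k)"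
  have RX: "sqrt SX2 / sqrt SX \<ge> \<bar>lam q\<bar>"
  proof -
    have "sqrt ((lam q)\<^sup>2 * SX) \<le> sqrt SX2" using SX' by (simp add: SX_def SX2_def)
    hence "\<bar>lam q\<bar> * sqrt SX \<le> sqrt SX2" by (simp add: real_sqrt_mult)
    moreover have "sqrt SX > 0" using SXpos by (simp add: SX_def)
    ultimately show ?thesis by (simp add: pos_le_divide_eq)
  qed
  have RY: "sqrt SY2 / sqrt SY \<le> \<bar>lam (q+1)\<bar>"
  proof -
    have "sqrt SY2 \<le> sqrt ((lam (q+1))\<^sup>2 * SY)" using SY' by (simp add: SY_def SY2_def)
    hence "sqrt SY2 \<le> \<bar>lam (q+1)\<bar> * sqrt SY" by (simp add: real_sqrt_mult)
    moreover have "sqrt SY > 0" using SYpos by (simp add: SY_def)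
    ultimately show ?thesis by (simp add: pos_divide_le_eq)
  qed
  have "\<bar>lam q / lam (q + 1)\<bar> * (sqrt SY2 / sqrt SY) \<le> \<bar>lam q / lam (q + 1)\<bar> * \<bar>lam (q+1)\<bar>"
    using RY by (rule mult_left_mono) simp
  also have "\<dots> = \<bar>lam q\<bar>" using lamq by (simp add: abs_divide)
  finally have main: "\<bar>lam q / lam (q + 1)\<bar> * (sqrt SY2 / sqrt SY) \<le> sqrt SX2 / sqrt SX" using RX by linarith
  have X1: "frob_cols A' u {2..q} = sqrt SX2"
  proof -
    have "{2..q} \<subseteq> {2..n}" using q by (auto simp: n_def)
    from fA'[OF this] show ?thesis by (simp add: SX2_def)
  qed
  have Y1: "frob_cols A' u {q+1..n} = sqrt SY2"
  proof -
    have "{q+1..n} \<subseteq> {2..n}" using q by auto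
    from fA'[OF this] show ?thesis by (simp add: SY2_def)
  qed
  have X0: "frob_cols A u {2..q} = sqrt SX" by (simp add: fA SX_def)
  have Y0: "frob_cols A u {q+1..n} = sqrt SY" by (simp add: fA SY_def)
  have "frob_cols A' u {2..q} / frob_cols A u {2..q} \<ge> \<bar>lam q / lam (q + 1)\<bar> * (frob_cols A' u {q+1..n} / frob_cols A u {q+1..n})"
    using main X1 Y1 X0 Y0 by simp
  thus ?thesis unfolding A_def A'_def s_def W_def n_def .
qed

end
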